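(* Let $\mathcal{G}=(\mathcal{V},\mathcal{E})$ be an undirected graph with $|\mathcal{N}_i|\ge (d+1)F+1$ for every $i\in\mathcal{V}$, and suppose the misbehaving agents follow the $F$-local attack model. If $\mathcal{G}$ is $((d+1)F+1)$-robust, then when the benign agents run the resilient multi-dimensional consensus algorithm described in the context, all benign agents achieve consensus exponentially regardless of the actions of the misbehaving agents: there is $\bar{x}\in\mathbb{R}^d$ with $x^i(k)\to\bar{x}$ exponentially fast as $k\to\infty$ for all $i\in\mathcal{B}$.
   Context: $\mathcal{G}=(\mathcal{V},\mathcal{E})$ is undirected, $\mathcal{N}_i=\{j\in\mathcal{V}: e_{ij}\in\mathcal{E}\}$. $\mathcal{G}$ is $r$-robust if for every pair of disjoint nonempty subsets $\mathcal{V}_1,\mathcal{V}_2\subsetneq\mathcal{V}$, some agent in $\mathcal{V}_1$ has at least $r$ neighbors outside $\mathcal{V}_1$, or some agent in $\mathcal{V}_2$ has at least $r$ neighbors outside $\mathcal{V}_2$. $\mathcal{V}=\mathcal{B}\cup\mathcal{F}$ disjointly; $\mathcal{F}$ are misbehaving agents, which may send arbitrary (possibly different to different neighbors, possibly colluding) values at each time; $\mathcal{B}$ are benign agents following the algorithm. $F$-local attack model: $|\mathcal{F}\cap\mathcal{N}_i|\le F$ for all $i\in\mathcal{V}$. For a finite multiset $\mathcal{A}\subset\mathbb{R}^d$ of cardinality $m$ (counted with multiplicity) and integer $0\le n\le m$, let $\mathcal{S}(\mathcal{A},n)$ be the collection of all sub-multisets of $\mathcal{A}$ of cardinality $m-n$,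 and $\varPsi(\mathcal{A},n)=\bigcap_{S\in\mathcal{S}(\mathcal{A},n)}\mathrm{Conv}(S)$. Algorithm: each benign agent $i$ has state $x^i(k)\in\mathbb{R}^d$, $x^i(0)$ arbitrary. At each time $k$: (1) $i$ collects in the multiset $\mathcal{X}^i(k)$ the values received from all $j\in\mathcal{N}_i$; (2) with $p=(k \bmod d)+1$, it sorts the points of $\mathcal{X}^i(k)$ in ascending order of their $p$-th entries; (3) $\mathcal{Y}^i(k)$ is the multiset of the first $(d+1)F+1$ sorted points, and $y^i(k)$ is any point of $\varPsi(\mathcal{Y}^i(k),F)$; (4) $\mathcal{Z}^i(k)$ is the multiset of the last $(d+1)F+1$ sorted points, and $z^i(k)$ is any point of $\varPsi(\mathcal{Z}^i(k),F)$; (5) $x^i(k+1)=\frac{1}{3}\big(x^i(k)+y^i(k)+z^i(k)\big)$, which is sent to all neighbors. *)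

theory Defs
  imports "HOL-Analysis.Analysis" "HOL-Library.Multiset"
begin

definition undirected_graph :: "'v set \<Rightarrow> ('v \<Rightarrow> 'v \<Rightarrow> bool) \<Rightarrow> bool" where
  "undirected_graph V E \<longleftrightarrow> finite V \<and> (\<forall>i j. E i j \<longrightarrow> i \<in> V \<and> j \<in> V)
     \<and> (\<forall>i j. E i j \<longrightarrow> E j i) \<and> (\<forall>i. \<not> E i i)"

definition nbrs :: "'v set \<Rightarrow> ('v \<Rightarrow> 'v \<Rightarrow> bool) \<Rightarrow> 'v \<Rightarrow> 'v set" where
  "nbrs V E i = {j \<in> V. E i j}"

definition r_robust :: "'v set \<Rightarrow> ('v \<Rightarrow> 'v \<Rightarrow> bool) \<Rightarrow> nat \<Rightarrow> bool" where
  "r_robust V E r \<longleftrightarrow>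
     (\<forall>V1 V2. V1 \<subset> V \<and> V2 \<subset> V \<and> V1 \<noteq> {} \<and> V2 \<noteq> {} \<and> V1 \<inter> V2 = {} \<longrightarrow>
        (\<exists>i\<in>V1. card (nbrs V E i - V1) \<ge> r) \<or> (\<exists>i\<in>V2. card (nbrs V E i - V2) \<ge> r))"

definition f_local :: "'v set \<Rightarrow> ('v \<Rightarrow> 'v \<Rightarrow> bool) \<Rightarrow> 'v set \<Rightarrow> nat \<Rightarrow> bool" where
  "f_local V E Fa f \<longleftrightarrow> (\<forall>i\<in>V. card (Fa \<inter> nbrs V E i) \<le> f)"

definition Psi :: "'a::real_vector multiset \<Rightarrow> nat \<Rightarrow> 'a set" where
  "Psi A n = \<Inter> {convex hull (set_mset S) | S. S \<subseteq># A \<and> size S = size A - n}"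

definition coord_at :: "nat \<Rightarrow> 'd::enum" where
  "coord_at k = (Enum.enum :: 'd list) ! (k mod CARD('d))"

text \<open>One step of the algorithm at benign agent i at time k.
  rcv j is the value i received from neighbour j at time k.\<close>
definition alg_update ::
  "nat \<Rightarrow> nat \<Rightarrow> 'v set \<Rightarrow> ('v \<Rightarrow> real^'d::enum) \<Rightarrow> real^'d::enum \<Rightarrow> real^'d::enum \<Rightarrow> bool" where
  "alg_update f k N rcv xold xnew \<longleftrightarrow>
     (let m = (CARD('d::enum) + 1) * f + 1 in
      \<exists>L y z. mset L = image_mset rcv (mset_set N)
        \<and> sorted_wrt (\<lambda>a b. a $ coord_at k \<le> b $ coord_at k) L
        \<and> y \<in> Psi (mset (take m L)) f
        \<and> z \<in> Psi (mset (drop (length L - m) L)) f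
        \<and> xnew = (1/3) *\<^sub>R (xold + y + z))"

text \<open>An execution: x k i is the state of benign agent i at time k; msg k i j is the value
  received by i from neighbour j at time k (the true state if j is benign, arbitrary otherwise).\<close>
definition resilient_run ::
  "'v set \<Rightarrow> ('v \<Rightarrow> 'v \<Rightarrow> bool) \<Rightarrow> 'v set \<Rightarrow> nat \<Rightarrow>
   (nat \<Rightarrow> 'v \<Rightarrow> real^'d::enum) \<Rightarrow> (nat \<Rightarrow> 'v \<Rightarrow> 'v \<Rightarrow> real^'d::enum) \<Rightarrow> bool" where
  "resilient_run V E Fa f x msg \<longleftrightarrow>
     (\<forall>k. \<forall>i\<in>V - Fa. \<forall>j\<in>nbrs V E i - Fa. msg k i j = x k j)
     \<and> (\<forall>k. \<forall>i\<in>V - Fa. alg_update f k (nbrs V E i) (msg k i) (x k i) (x (Suc k) i))"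

end

theory Submission
  imports Defs
begin

lemma hull_comp_le:
  fixes y :: "real^'d"
  assumes "y \<in> convex hull X" "\<forall>a\<in>X. a $ q \<le> c"
  shows "y $ q \<le> c"
proof -
  have cv: "convex {v::real^'d. v $ q \<le> c}"
    unfolding convex_def
  proof (safe)
    fix a b :: "real^'d" and u v :: real
    assume h: "a $ q \<le> c" "b $ q \<le> c" "0 \<le> u" "0 \<le> v" "u + v = 1"
    have "u * a $ q \<le> u * c" using h by (simp add: mult_left_mono)
    moreover have "v * b $ q \<le> v * c" using h by (simp add: mult_left_mono)
    ultimately have "u * a $ q + v * b $ q \<le> (u + v) * c" by (simp add: distrib_right)
    then show "(u *\<^sub>R a + v *\<^sub>R b) $ q \<le> c" using h by simp
  qed
  have "convex hull X \<subseteq> {v. v $ q \<le> c}"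
    by (rule hull_minimal) (use assms(2) cv in auto)
  then show ?thesis using assms(1) by auto
qed

lemma hull_comp_ge:
  fixes y :: "real^'d"
  assumes "y \<in> convex hull X" "\<forall>a\<in>X. c \<le> a $ q"
  shows "c \<le> y $ q"
proof -
  have "(-y) \<in> convex hull (uminus ` X)"
    using assms(1) by (simp add: convex_hull_linear_image[symmetric] linear_uminus)
  then have "(-y) $ q \<le> -c"
    by (rule hull_comp_le) (use assms(2) in auto)
  then show ?thesis by simp
qed

lemma psi_hull:
  assumes "y \<in> Psi A f" "S \<subseteq># A" "size S = size A - f"
  shows "y \<in> convex hull set_mset S"
  using assms unfolding Psi_def by blast

lemma sorted_prefix:
  fixes g :: "'a \<Rightarrow> real"
  assumes "sorted_wrt (\<lambda>a b. g a \<le> g b) L" "r \<le> length (filter (\<lambda>a. g a \<le> c) L)"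
    "a \<in> set (take r L)"
  shows "g a \<le> c"
proof (rule ccontr)
  assume na: "\<not> g a \<le> c"
  from assms(3) obtain j where j: "j < length L" "j < r" "L ! j = a"
    by (auto simp: in_set_conv_nth)
  have "{i. i < length L \<and> g (L ! i) \<le> c} \<subseteq> {..<j}"
  proof
    fix i assume i: "i \<in> {i. i < length L \<and> g (L ! i) \<le> c}"
    show "i \<in> {..<j}"
    proof (rule ccontr)
      assume "i \<notin> {..<j}"
      then have "j \<le> i" by auto
      then have "g (L ! j) \<le> g (L ! i)"
        using assms(1) i by (cases "j = i") (auto simp: sorted_wrt_iff_nth_less)
      then show False using i j na by auto
    qed
  qed
  then have "card {i. i < length L \<and> g (L ! i) \<le> c} \<le> j"
    by (metis card_lessThan card_mono finite_lessThan)
  then show False using assms(2) j by (simp add: length_filter_conv_card)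
qed

lemma mset_take_sub: "mset (take n xs) \<subseteq># mset xs"
  by (metis append_take_drop_id mset_append mset_subset_eq_add_left)

lemma mset_drop_sub: "mset (drop n xs) \<subseteq># mset xs"
  by (metis append_take_drop_id mset_append mset_subset_eq_add_right)

lemma mset_filter_sub: "mset (filter P xs) \<subseteq># mset xs"
  by (simp)

lemma len_filter_take: "length (filter P (take n xs)) \<le> length (filter P xs)"
  by (metis append_take_drop_id filter_append length_append le_add1)

lemma len_filter_drop: "length (filter P (drop n xs)) \<le> length (filter P xs)"
  by (metis append_take_drop_id filter_append length_append le_add2)

lemma len_filter_count:
  assumes "finite N" "mset L = image_mset rcv (mset_set N)"
  shows "length (filter P L) = card {j\<in>N. P (rcv j)}"
proof -
  have "length (filter P L) = size (filter_mset P (mset L))"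
    by (metis mset_filter size_mset)
  also have "\<dots> = size (image_mset rcv (filter_mset (\<lambda>j. P (rcv j)) (mset_set N)))"
    by (simp add: assms(2) filter_mset_image_mset)
  also have "\<dots> = card {j\<in>N. P (rcv j)}"
    using assms(1) by (simp add: filter_mset_mset_set)
  finally show ?thesis .
qed


lemma step_props:
  fixes rcv :: "'v \<Rightarrow> real^'d::enum"
  assumes upd: "alg_update f k N rcv xold xnew"
    and fin: "finite N" and cardN: "card N \<ge> (CARD('d) + 1) * f + 1"
    and GN: "G \<subseteq> N" and cG: "card (N - G) \<le> f"
  shows "\<exists>y z. xnew = (1/3) *\<^sub>R (xold + y + z)
     \<and> (\<forall>q c. (\<forall>j\<in>G. rcv j $ q \<le> c) \<longrightarrow> y $ q \<le> c \<and> z $ q \<le> c)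
     \<and> (\<forall>q c. (\<forall>j\<in>G. c \<le> rcv j $ q) \<longrightarrow> c \<le> y $ q \<and> c \<le> z $ q)
     \<and> (\<forall>c. card {j\<in>N. rcv j $ coord_at k \<le> c} \<ge> (CARD('d) + 1) * f + 1 - f \<longrightarrow> y $ coord_at k \<le> c)
     \<and> (\<forall>c. card {j\<in>N. c \<le> rcv j $ coord_at k} \<ge> (CARD('d) + 1) * f + 1 - f \<longrightarrow> c \<le> z $ coord_at k)"
proof -
  define m where "m = (CARD('d) + 1) * f + 1"
  define p :: 'd where "p = coord_at k"
  obtain L y z where L: "mset L = image_mset rcv (mset_set N)"
    and srt: "sorted_wrt (\<lambda>a b. a $ p \<le> b $ p) L"
    and y: "y \<in> Psi (mset (take m L)) f"
    and z: "z \<in> Psi (mset (drop (length L - m) L)) f"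
    and xn: "xnew = (1/3) *\<^sub>R (xold + y + z)"
    using upd unfolding alg_update_def m_def p_def Let_def by blast
  have lenL: "length L = card N"
    by (metis L fin size_image_mset size_mset size_mset_set)
  have mL: "m \<le> length L" using cardN lenL m_def by simp
  have fm: "f \<le> m" unfolding m_def by simp
  define P where "P = (\<lambda>a. a \<in> rcv ` G)"
  have bad: "length (filter (\<lambda>a. \<not> P a) L) \<le> f"
  proof -
    have "length (filter (\<lambda>a. \<not> P a) L) = card {j\<in>N. \<not> P (rcv j)}"
      by (rule len_filter_count[OF fin L])
    also have "\<dots> \<le> card (N - G)"
      by (rule card_mono) (use fin P_def in auto)
    finally show ?thesis using cG by simp
  qed
  have good_sub: "\<exists>S. S \<subseteq># mset A \<and> size S = size (mset A) - f \<and> set_mset S \<subseteq> rcv ` G"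
    if A: "length A = m" "length (filter (\<lambda>a. \<not> P a) A) \<le> f" for A
  proof -
    have "length (filter P A) + length (filter (\<lambda>a. \<not> P a) A) = length A"
      by (rule sum_length_filter_compl)
    then have lg: "length (filter P A) \<ge> m - f" using A by linarith
    define S where "S = mset (take (m - f) (filter P A))"
    have "S \<subseteq># mset A"
      unfolding S_def using mset_take_sub mset_filter_sub subset_mset.order_trans by blast
    moreover have "size S = size (mset A) - f" unfolding S_def using lg A by simp
    moreover have "set_mset S \<subseteq> rcv ` G" unfolding S_def P_def
      by (auto dest: in_set_takeD)
    ultimately show ?thesis by blast
  qed
  have A1: "length (take m L) = m" using mL by simp
  have A2: "length (drop (length L - m) L) = m" using mL by simp
  obtain S1 where S1: "S1 \<subseteq># mset (take m L)" "size S1 = size (mset (take m L)) - f" "set_mset S1 \<subseteq> rcv ` G"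
    using good_sub[OF A1] bad len_filter_take by (meson le_trans)
  obtain S2 where S2: "S2 \<subseteq># mset (drop (length L - m) L)" "size S2 = size (mset (drop (length L - m) L)) - f" "set_mset S2 \<subseteq> rcv ` G"
    using good_sub[OF A2] bad len_filter_drop by (meson le_trans)
  have yh: "y \<in> convex hull set_mset S1" using psi_hull[OF y S1(1,2)] .
  have zh: "z \<in> convex hull set_mset S2" using psi_hull[OF z S2(1,2)] .
  have c1: "\<forall>q c. (\<forall>j\<in>G. rcv j $ q \<le> c) \<longrightarrow> y $ q \<le> c \<and> z $ q \<le> c"
  proof (intro allI impI conjI)
    fix q c assume h: "\<forall>j\<in>G. rcv j $ q \<le> c"
    show "y $ q \<le> c" by (rule hull_comp_le[OF yh]) (use S1(3) h in auto)
    show "z $ q \<le> c" by (rule hull_comp_le[OF zh]) (use S2(3) h in auto)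
  qed
  have c2: "\<forall>q c. (\<forall>j\<in>G. c \<le> rcv j $ q) \<longrightarrow> c \<le> y $ q \<and> c \<le> z $ q"
  proof (intro allI impI conjI)
    fix q c assume h: "\<forall>j\<in>G. c \<le> rcv j $ q"
    show "c \<le> y $ q" by (rule hull_comp_ge[OF yh]) (use S1(3) h in auto)
    show "c \<le> z $ q" by (rule hull_comp_ge[OF zh]) (use S2(3) h in auto)
  qed
  have c3: "y $ p \<le> c" if h: "card {j\<in>N. rcv j $ p \<le> c} \<ge> m - f" for c
  proof -
    define S where "S = mset (take (m - f) L)"
    have "take (m - f) L = take (m - f) (take m L)" by simp
    then have "S \<subseteq># mset (take m L)" unfolding S_def by (metis mset_take_sub)
    moreover have "size S = size (mset (take m L)) - f" unfolding S_def using mL by simp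
    ultimately have yS: "y \<in> convex hull set_mset S" using psi_hull[OF y] by blast
    have lf: "m - f \<le> length (filter (\<lambda>a. a $ p \<le> c) L)"
      using h len_filter_count[OF fin L] by simp
    show ?thesis
      by (rule hull_comp_le[OF yS]) (use sorted_prefix[OF srt lf] S_def in auto)
  qed
  have c4: "c \<le> z $ p" if h: "card {j\<in>N. c \<le> rcv j $ p} \<ge> m - f" for c
  proof -
    define S where "S = mset (drop (length L - (m - f)) L)"
    have "drop (length L - (m - f)) L = drop f (drop (length L - m) L)"
      using mL fm by (simp add: add.commute)
    then have "S \<subseteq># mset (drop (length L - m) L)" unfolding S_def by (metis mset_drop_sub)
    moreover have "size S = size (mset (drop (length L - m) L)) - f" unfolding S_def using mL by simp
    ultimately have zS: "z \<in> convex hull set_mset S" using psi_hull[OF z] by blast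
    have srt': "sorted_wrt (\<lambda>a b. - (a $ p) \<le> - (b $ p)) (rev L)"
      using srt by (simp add: sorted_wrt_rev)
    have "length (filter (\<lambda>a. - (a $ p) \<le> - c) (rev L)) = length (filter (\<lambda>a. c \<le> a $ p) L)"
      by (simp add: rev_filter[symmetric])
    then have lf: "m - f \<le> length (filter (\<lambda>a. - (a $ p) \<le> - c) (rev L))"
      using h len_filter_count[OF fin L] by simp
    have "set_mset S = set (take (m - f) (rev L))" unfolding S_def by (simp add: take_rev)
    then have "\<forall>a\<in>set_mset S. - (a $ p) \<le> - c"
      using sorted_prefix[OF srt' lf] by auto
    then show ?thesis
      by (intro hull_comp_ge[OF zS]) auto
  qed
  show ?thesis
    using xn c1 c2 c3 c4 unfolding m_def p_def by blast
qed


lemma exists_eff: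
  fixes q :: "'d::enum"
  shows "\<exists>s. CARD('d) * j \<le> s \<and> s < CARD('d) * j + CARD('d) \<and> coord_at (k + s) = q"
proof -
  define d where "d = CARD('d)"
  have dpos: "0 < d" unfolding d_def by simp
  obtain idx where idx: "idx < d" "(Enum.enum :: 'd list) ! idx = q"
    using in_enum[of q] unfolding d_def card_UNIV_length_enum by (metis in_set_conv_nth)
  define r where "r = (idx + d - k mod d) mod d"
  have r: "r < d" using dpos unfolding r_def by simp
  have "(k + (d * j + r)) mod d = (k mod d + r) mod d"
  proof -
    have "k + (d * j + r) = (k + r) + j * d" by simp
    then have "(k + (d * j + r)) mod d = (k + r) mod d" by (metis mod_mult_self1)
    then show ?thesis by (simp add: mod_add_left_eq)
  qed
  also have "\<dots> = (k mod d + (idx + d - k mod d)) mod d"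
    unfolding r_def by (simp add: mod_add_right_eq)
  also have "\<dots> = (idx + d) mod d"
  proof -
    have "k mod d < d" using dpos by simp
    then have "k mod d + (idx + d - k mod d) = idx + d" by linarith
    then show ?thesis by simp
  qed
  also have "\<dots> = idx" using idx by simp
  finally have "(k + (d * j + r)) mod d = idx" .
  then have "coord_at (k + (d * j + r)) = q"
    unfolding coord_at_def d_def using idx d_def by simp
  then show ?thesis using r unfolding d_def by (intro exI[of _ "CARD('d) * j + r"]) simp
qed


locale cons_setting =
  fixes V :: "'v set" and E :: "'v \<Rightarrow> 'v \<Rightarrow> bool" and Fa :: "'v set" and f :: nat
    and x :: "nat \<Rightarrow> 'v \<Rightarrow> real^'d::enum" and msg :: "nat \<Rightarrow> 'v \<Rightarrow> 'v \<Rightarrow> real^'d::enum"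
  assumes G: "undirected_graph V E"
    and deg: "\<forall>i\<in>V. card (nbrs V E i) \<ge> (CARD('d::enum) + 1) * f + 1"
    and FaV: "Fa \<subseteq> V"
    and fl: "f_local V E Fa f"
    and rob: "r_robust V E ((CARD('d::enum) + 1) * f + 1)"
    and run: "resilient_run V E Fa f x msg"
    and Bne: "V - Fa \<noteq> {}"
begin

definition Mx :: "nat \<Rightarrow> 'd \<Rightarrow> real" where
  "Mx k q = Max ((\<lambda>j. x k j $ q) ` (V - Fa))"
definition mn :: "nat \<Rightarrow> 'd \<Rightarrow> real" where
  "mn k q = Min ((\<lambda>j. x k j $ q) ` (V - Fa))"

lemma finV: "finite V" using G unfolding undirected_graph_def by blast
lemma finB: "finite (V - Fa)" using finV by simp
lemma finN: "finite (nbrs V E i)" using finV unfolding nbrs_def by simp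

lemma Mx_ge: "i \<in> V - Fa \<Longrightarrow> x k i $ q \<le> Mx k q"
  unfolding Mx_def using finB by (intro Max_ge) auto
lemma mn_le: "i \<in> V - Fa \<Longrightarrow> mn k q \<le> x k i $ q"
  unfolding mn_def using finB by (intro Min_le) auto
lemma mn_le_Mx: "mn k q \<le> Mx k q"
  using Bne Mx_ge mn_le by (meson all_not_in_conv order_trans)

lemma bstep:
  assumes i: "i \<in> V - Fa"
  shows "\<exists>y z. x (Suc k) i = (1/3) *\<^sub>R (x k i + y + z)
     \<and> (\<forall>q c. (\<forall>j\<in>nbrs V E i - Fa. x k j $ q \<le> c) \<longrightarrow> y $ q \<le> c \<and> z $ q \<le> c)
     \<and> (\<forall>q c. (\<forall>j\<in>nbrs V E i - Fa. c \<le> x k j $ q) \<longrightarrow> c \<le> y $ q \<and> c \<le> z $ q)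
     \<and> (\<forall>c. card {j\<in>nbrs V E i - Fa. x k j $ coord_at k \<le> c} \<ge> (CARD('d) + 1) * f + 1 - f \<longrightarrow> y $ coord_at k \<le> c)
     \<and> (\<forall>c. card {j\<in>nbrs V E i - Fa. c \<le> x k j $ coord_at k} \<ge> (CARD('d) + 1) * f + 1 - f \<longrightarrow> c \<le> z $ coord_at k)"
proof -
  let ?N = "nbrs V E i"
  have upd: "alg_update f k ?N (msg k i) (x k i) (x (Suc k) i)"
    using run i unfolding resilient_run_def by blast
  have eq: "\<And>j. j \<in> ?N - Fa \<Longrightarrow> msg k i j = x k j"
    using run i unfolding resilient_run_def by blast
  have cG: "card (?N - (?N - Fa)) \<le> f"
  proof -
    have "?N - (?N - Fa) = Fa \<inter> ?N" by blast
    then show ?thesis using fl i unfolding f_local_def by auto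
  qed
  obtain y z where yz: "x (Suc k) i = (1/3) *\<^sub>R (x k i + y + z)"
     "\<forall>q c. (\<forall>j\<in>?N - Fa. msg k i j $ q \<le> c) \<longrightarrow> y $ q \<le> c \<and> z $ q \<le> c"
     "\<forall>q c. (\<forall>j\<in>?N - Fa. c \<le> msg k i j $ q) \<longrightarrow> c \<le> y $ q \<and> c \<le> z $ q"
     "\<forall>c. card {j\<in>?N. msg k i j $ coord_at k \<le> c} \<ge> (CARD('d) + 1) * f + 1 - f \<longrightarrow> y $ coord_at k \<le> c"
     "\<forall>c. card {j\<in>?N. c \<le> msg k i j $ coord_at k} \<ge> (CARD('d) + 1) * f + 1 - f \<longrightarrow> c \<le> z $ coord_at k"
    using step_props[OF upd finN _ _ cG] deg i by auto
  have m1: "card {j\<in>?N - Fa. x k j $ coord_at k \<le> c} \<le> card {j\<in>?N. msg k i j $ coord_at k \<le> c}" for c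
    by (rule card_mono) (use finN eq in auto)
  have m2: "card {j\<in>?N - Fa. c \<le> x k j $ coord_at k} \<le> card {j\<in>?N. c \<le> msg k i j $ coord_at k}" for c
    by (rule card_mono) (use finN eq in auto)
  show ?thesis
    apply (rule exI[of _ y], rule exI[of _ z])
    using yz eq m1 m2 by (smt (verit, ccfv_threshold) le_trans)
qed

lemma comp3: "((1/3) *\<^sub>R (a + b + c :: real^'d::enum)) $ q = (a $ q + b $ q + c $ q) / 3"
  by simp

lemma upper:
  assumes i: "i \<in> V - Fa"
  shows "x (Suc k) i $ q \<le> (x k i $ q + 2 * Mx k q) / 3"
proof -
  obtain y z where yz: "x (Suc k) i = (1/3) *\<^sub>R (x k i + y + z)"
    "\<forall>q c. (\<forall>j\<in>nbrs V E i - Fa. x k j $ q \<le> c) \<longrightarrow> y $ q \<le> c \<and> z $ q \<le> c"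
    using bstep[OF i, of k] by blast
  have "\<forall>j\<in>nbrs V E i - Fa. x k j $ q \<le> Mx k q"
    using Mx_ge unfolding nbrs_def by auto
  then have "y $ q \<le> Mx k q" "z $ q \<le> Mx k q" using yz(2) by auto
  then show ?thesis using yz(1) comp3 by simp
qed

lemma lower:
  assumes i: "i \<in> V - Fa"
  shows "(x k i $ q + 2 * mn k q) / 3 \<le> x (Suc k) i $ q"
proof -
  obtain y z where yz: "x (Suc k) i = (1/3) *\<^sub>R (x k i + y + z)"
    "\<forall>q c. (\<forall>j\<in>nbrs V E i - Fa. c \<le> x k j $ q) \<longrightarrow> c \<le> y $ q \<and> c \<le> z $ q"
    using bstep[OF i, of k] by blast
  have "\<forall>j\<in>nbrs V E i - Fa. mn k q \<le> x k j $ q"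
    using mn_le unfolding nbrs_def by auto
  then have "mn k q \<le> y $ q" "mn k q \<le> z $ q" using yz(2) by auto
  then show ?thesis using yz(1) comp3 by simp
qed

lemma eff_upper:
  assumes i: "i \<in> V - Fa"
    and c: "card {j\<in>nbrs V E i - Fa. x k j $ coord_at k \<le> c} \<ge> (CARD('d) + 1) * f + 1 - f"
  shows "x (Suc k) i $ coord_at k \<le> (x k i $ coord_at k + c + Mx k (coord_at k)) / 3"
proof -
  let ?q = "coord_at k :: 'd"
  obtain y z where yz: "x (Suc k) i = (1/3) *\<^sub>R (x k i + y + z)"
    "\<forall>q c. (\<forall>j\<in>nbrs V E i - Fa. x k j $ q \<le> c) \<longrightarrow> y $ q \<le> c \<and> z $ q \<le> c"
    "\<forall>c. card {j\<in>nbrs V E i - Fa. x k j $ coord_at k \<le> c} \<ge> (CARD('d) + 1) * f + 1 - f \<longrightarrow> y $ coord_at k \<le> c"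
    using bstep[OF i, of k] by blast
  have "\<forall>j\<in>nbrs V E i - Fa. x k j $ ?q \<le> Mx k ?q"
    using Mx_ge unfolding nbrs_def by auto
  then have "z $ ?q \<le> Mx k ?q" using yz(2) by auto
  moreover have "y $ ?q \<le> c" using yz(3) c by blast
  ultimately show ?thesis using yz(1) comp3 by simp
qed

lemma eff_lower:
  assumes i: "i \<in> V - Fa"
    and c: "card {j\<in>nbrs V E i - Fa. c \<le> x k j $ coord_at k} \<ge> (CARD('d) + 1) * f + 1 - f"
  shows "(x k i $ coord_at k + c + mn k (coord_at k)) / 3 \<le> x (Suc k) i $ coord_at k"
proof -
  let ?q = "coord_at k :: 'd"
  obtain y z where yz: "x (Suc k) i = (1/3) *\<^sub>R (x k i + y + z)"
    "\<forall>q c. (\<forall>j\<in>nbrs V E i - Fa. c \<le> x k j $ q) \<longrightarrow> c \<le> y $ q \<and> c \<le> z $ q"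
    "\<forall>c. card {j\<in>nbrs V E i - Fa. c \<le> x k j $ coord_at k} \<ge> (CARD('d) + 1) * f + 1 - f \<longrightarrow> c \<le> z $ coord_at k"
    using bstep[OF i, of k] by blast
  have "\<forall>j\<in>nbrs V E i - Fa. mn k ?q \<le> x k j $ ?q"
    using mn_le unfolding nbrs_def by auto
  then have "mn k ?q \<le> y $ ?q" using yz(2) by auto
  moreover have "c \<le> z $ ?q" using yz(3) c by blast
  ultimately show ?thesis using yz(1) comp3 by simp
qed

lemma Mx_Suc: "Mx (Suc k) q \<le> Mx k q"
proof -
  have "\<forall>i\<in>V - Fa. x (Suc k) i $ q \<le> Mx k q"
  proof
    fix i assume i: "i \<in> V - Fa"
    have a: "x (Suc k) i $ q \<le> (x k i $ q + 2 * Mx k q) / 3" by (rule upper[OF i])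
    have b: "x k i $ q \<le> Mx k q" by (rule Mx_ge[OF i])
    show "x (Suc k) i $ q \<le> Mx k q" using a b by (simp add: field_simps)
  qed
  then show ?thesis unfolding Mx_def[of "Suc k"] using finB Bne by (simp add: Max_le_iff)
qed

lemma mn_Suc: "mn k q \<le> mn (Suc k) q"
proof -
  have "\<forall>i\<in>V - Fa. mn k q \<le> x (Suc k) i $ q"
  proof
    fix i assume i: "i \<in> V - Fa"
    have a: "(x k i $ q + 2 * mn k q) / 3 \<le> x (Suc k) i $ q" by (rule lower[OF i])
    have b: "mn k q \<le> x k i $ q" by (rule mn_le[OF i])
    show "mn k q \<le> x (Suc k) i $ q" using a b by (simp add: field_simps)
  qed
  then show ?thesis unfolding mn_def[of "Suc k"] using finB Bne by (simp add: Min_ge_iff)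
qed

lemma Mx_mono: "k \<le> k' \<Longrightarrow> Mx k' q \<le> Mx k q"
  by (rule lift_Suc_antimono_le[of "\<lambda>k. Mx k q"]) (use Mx_Suc in auto)

lemma mn_mono: "k \<le> k' \<Longrightarrow> mn k q \<le> mn k' q"
  by (rule lift_Suc_mono_le[of "\<lambda>k. mn k q"]) (use mn_Suc in auto)

lemma contraction:
  "Mx (k + CARD('d) * card (V - Fa)) q - mn (k + CARD('d) * card (V - Fa)) q
     \<le> (1 - 1 / (2 * 3 ^ (CARD('d) * card (V - Fa)))) * (Mx k q - mn k q)"
proof -
  define d where "d = CARD('d)"
  define n where "n = card (V - Fa)"
  define T where "T = d * n"
  define D where "D = Mx k q - mn k q"
  have D0: "0 \<le> D" using mn_le_Mx unfolding D_def by simp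
  define eps where "eps t = D / (2 * 3 ^ t)" for t :: nat
  define U where "U t = {i\<in>V - Fa. Mx k q - eps t < x (k + t) i $ q}" for t
  define Lo where "Lo t = {i\<in>V - Fa. x (k + t) i $ q < mn k q + eps t}" for t
  have eps_Suc: "eps (Suc t) = eps t / 3" for t unfolding eps_def by simp
  have eps_le: "eps t \<le> D / 2" for t
  proof -
    have "(1::real) \<le> 3 ^ t" by simp
    then have "2 \<le> 2 * (3::real) ^ t" by simp
    then show ?thesis unfolding eps_def using D0 by (intro divide_left_mono) auto
  qed
  have eps0: "0 \<le> eps t" for t unfolding eps_def using D0 by simp
  have MxkT: "Mx (k + t) q \<le> Mx k q" for t by (rule Mx_mono) simp
  have mnkT: "mn k q \<le> mn (k + t) q" for t by (rule mn_mono) simp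
  have U_Suc: "U (Suc t) \<subseteq> U t" for t
  proof
    fix i assume iU: "i \<in> U (Suc t)"
    then have i: "i \<in> V - Fa" unfolding U_def by simp
    show "i \<in> U t"
    proof (rule ccontr)
      assume "i \<notin> U t"
      then have le: "x (k + t) i $ q \<le> Mx k q - eps t" using i unfolding U_def by auto
      have "x (Suc (k + t)) i $ q \<le> (x (k + t) i $ q + 2 * Mx (k + t) q) / 3" by (rule upper[OF i])
      also have "\<dots> \<le> (Mx k q - eps t + 2 * Mx k q) / 3" using le MxkT[of t] by simp
      also have "\<dots> = Mx k q - eps (Suc t)" using eps_Suc[of t] by simp
      finally show False using iU unfolding U_def by simp
    qed
  qed
  have Lo_Suc: "Lo (Suc t) \<subseteq> Lo t" for t
  proof
    fix i assume iL: "i \<in> Lo (Suc t)"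
    then have i: "i \<in> V - Fa" unfolding Lo_def by simp
    show "i \<in> Lo t"
    proof (rule ccontr)
      assume "i \<notin> Lo t"
      then have le: "mn k q + eps t \<le> x (k + t) i $ q" using i unfolding Lo_def by auto
      have "mn k q + eps (Suc t) = (mn k q + eps t + 2 * mn k q) / 3" using eps_Suc[of t] by simp
      also have "\<dots> \<le> (x (k + t) i $ q + 2 * mn (k + t) q) / 3" using le mnkT[of t] by simp
      also have "\<dots> \<le> x (Suc (k + t)) i $ q" by (rule lower[OF i])
      finally show False using iL unfolding Lo_def by simp
    qed
  qed
  have U_anti: "t \<le> t' \<Longrightarrow> U t' \<subseteq> U t" for t t'
    by (rule lift_Suc_antimono_le[of U]) (use U_Suc in auto)
  have Lo_anti: "t \<le> t' \<Longrightarrow> Lo t' \<subseteq> Lo t" for t t'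
    by (rule lift_Suc_antimono_le[of Lo]) (use Lo_Suc in auto)
  have UB: "U t \<subseteq> V - Fa" for t unfolding U_def by auto
  have LB: "Lo t \<subseteq> V - Fa" for t unfolding Lo_def by auto
  have disj: "U t \<inter> Lo t = {}" for t
  proof (rule ccontr)
    assume "U t \<inter> Lo t \<noteq> {}"
    then obtain i where "i \<in> U t" "i \<in> Lo t" by blast
    then have "Mx k q - eps t < x (k + t) i $ q" "x (k + t) i $ q < mn k q + eps t"
      unfolding U_def Lo_def by auto
    then show False using eps_le[of t] D0 unfolding D_def by argo
  qed
  have finU: "finite (U t)" for t using finB UB finite_subset by blast
  have finL: "finite (Lo t)" for t using finB LB finite_subset by blast
  have card_sum: "card (U t) + card (Lo t) \<le> n" for t
  proof -
    have "card (U t) + card (Lo t) = card (U t \<union> Lo t)"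
      using card_Un_disjoint[OF finU finL disj] by simp
    also have "\<dots> \<le> n" unfolding n_def by (rule card_mono[OF finB]) (use UB LB in auto)
    finally show ?thesis .
  qed
  let ?m = "(CARD('d) + 1) * f + 1"
  have eff: "U (Suc t) \<subset> U t \<or> Lo (Suc t) \<subset> Lo t"
    if cq: "coord_at (k + t) = q" and Une: "U t \<noteq> {}" and Lne: "Lo t \<noteq> {}" for t
  proof -
    have FV: "V - Fa \<subseteq> V" by auto
    have U1: "U t \<subset> V" using UB[of t] LB[of t] FV disj[of t] Lne by blast
    have L1: "Lo t \<subset> V" using UB[of t] LB[of t] FV disj[of t] Une by blast
    have "(\<exists>i\<in>U t. card (nbrs V E i - U t) \<ge> ?m) \<or> (\<exists>i\<in>Lo t. card (nbrs V E i - Lo t) \<ge> ?m)"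
      using rob U1 L1 Une Lne disj unfolding r_robust_def by blast
    then show ?thesis
    proof
      assume "\<exists>i\<in>U t. card (nbrs V E i - U t) \<ge> ?m"
      then obtain i where iU: "i \<in> U t" and ci: "card (nbrs V E i - U t) \<ge> ?m" by blast
      have i: "i \<in> V - Fa" using iU UB by auto
      let ?N = "nbrs V E i"
      let ?S = "{j\<in>?N - Fa. x (k + t) j $ coord_at (k + t) \<le> Mx k q - eps t}"
      have sub: "?N - U t \<subseteq> (Fa \<inter> ?N) \<union> ?S"
        using cq unfolding U_def nbrs_def by auto
      have "card (?N - U t) \<le> card ((Fa \<inter> ?N) \<union> ?S)"
        by (rule card_mono) (use finN sub in auto)
      also have "\<dots> \<le> card (Fa \<inter> ?N) + card ?S" by (rule card_Un_le)
      also have "\<dots> \<le> f + card ?S" using fl i unfolding f_local_def by auto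
      finally have "card ?S \<ge> ?m - f" using ci by linarith
      then have "x (Suc (k + t)) i $ coord_at (k + t) \<le> (x (k + t) i $ coord_at (k + t) + (Mx k q - eps t) + Mx (k + t) (coord_at (k + t))) / 3"
        by (rule eff_upper[OF i])
      then have a: "x (Suc (k + t)) i $ q \<le> (x (k + t) i $ q + (Mx k q - eps t) + Mx (k + t) q) / 3"
        using cq by simp
      have b: "x (k + t) i $ q \<le> Mx k q" using Mx_ge[OF i, of "k + t" q] MxkT[of t] by simp
      have "x (Suc (k + t)) i $ q \<le> Mx k q - eps (Suc t)"
        using a b MxkT[of t] eps_Suc[of t] by (simp add: field_simps)
      then have "i \<notin> U (Suc t)" unfolding U_def by simp
      then show ?thesis using iU U_Suc[of t] by blast
    next
      assume "\<exists>i\<in>Lo t. card (nbrs V E i - Lo t) \<ge> ?m"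
      then obtain i where iL: "i \<in> Lo t" and ci: "card (nbrs V E i - Lo t) \<ge> ?m" by blast
      have i: "i \<in> V - Fa" using iL LB by auto
      let ?N = "nbrs V E i"
      let ?S = "{j\<in>?N - Fa. mn k q + eps t \<le> x (k + t) j $ coord_at (k + t)}"
      have sub: "?N - Lo t \<subseteq> (Fa \<inter> ?N) \<union> ?S"
        using cq unfolding Lo_def nbrs_def by auto
      have "card (?N - Lo t) \<le> card ((Fa \<inter> ?N) \<union> ?S)"
        by (rule card_mono) (use finN sub in auto)
      also have "\<dots> \<le> card (Fa \<inter> ?N) + card ?S" by (rule card_Un_le)
      also have "\<dots> \<le> f + card ?S" using fl i unfolding f_local_def by auto
      finally have "card ?S \<ge> ?m - f" using ci by linarith
      then have "(x (k + t) i $ coord_at (k + t) + (mn k q + eps t) + mn (k + t) (coord_at (k + t))) / 3 \<le> x (Suc (k + t)) i $ coord_at (k + t)"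
        by (rule eff_lower[OF i])
      then have a: "(x (k + t) i $ q + (mn k q + eps t) + mn (k + t) q) / 3 \<le> x (Suc (k + t)) i $ q"
        using cq by simp
      have b: "mn k q \<le> x (k + t) i $ q" using mn_le[OF i, of "k + t" q] mnkT[of t] by simp
      have "mn k q + eps (Suc t) \<le> x (Suc (k + t)) i $ q"
        using a b mnkT[of t] eps_Suc[of t] by (simp add: field_simps)
      then have "i \<notin> Lo (Suc t)" unfolding Lo_def by simp
      then show ?thesis using iL Lo_Suc[of t] by blast
    qed
  qed
  have block: "U (d * j) = {} \<or> Lo (d * j) = {} \<or> card (U (d * j)) + card (Lo (d * j)) + j \<le> n" for j
  proof (induction j)
    case 0
    then show ?case using card_sum[of 0] by simp
  next
    case (Suc j)
    show ?case
    proof (cases "U (d * Suc j) = {} \<or> Lo (d * Suc j) = {}")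
      case True
      then show ?thesis by blast
    next
      case False
      obtain s where s: "d * j \<le> s" "s < d * j + d" "coord_at (k + s) = q"
        using exists_eff[of j k q] unfolding d_def by blast
      have le1: "Suc s \<le> d * Suc j" using s by simp
      have sub1: "U (d * Suc j) \<subseteq> U (Suc s)" "Lo (d * Suc j) \<subseteq> Lo (Suc s)"
        using U_anti[OF le1] Lo_anti[OF le1] by auto
      have sub2: "U s \<subseteq> U (d * j)" "Lo s \<subseteq> Lo (d * j)"
        using U_anti[OF s(1)] Lo_anti[OF s(1)] by auto
      have ne: "U s \<noteq> {}" "Lo s \<noteq> {}" "U (d * j) \<noteq> {}" "Lo (d * j) \<noteq> {}"
        using False sub1 sub2 U_Suc[of s] Lo_Suc[of s] by blast+
      have IH: "card (U (d * j)) + card (Lo (d * j)) + j \<le> n" using Suc.IH ne by blast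
      have "card (U (d * Suc j)) + card (Lo (d * Suc j)) < card (U s) + card (Lo s)"
      proof -
        have c1: "card (U (d * Suc j)) \<le> card (U (Suc s))" "card (Lo (d * Suc j)) \<le> card (Lo (Suc s))"
          using sub1 by (auto intro: card_mono finU finL)
        have c2: "card (U (Suc s)) \<le> card (U s)" "card (Lo (Suc s)) \<le> card (Lo s)"
          using U_Suc[of s] Lo_Suc[of s] by (auto intro: card_mono finU finL)
        have "card (U (Suc s)) < card (U s) \<or> card (Lo (Suc s)) < card (Lo s)"
          using eff[OF s(3) ne(1,2)] by (meson finU finL psubset_card_mono)
        then show ?thesis using c1 c2 by linarith
      qed
      moreover have "card (U s) + card (Lo s) \<le> card (U (d * j)) + card (Lo (d * j))"
        using sub2 by (meson add_le_mono card_mono finU finL)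
      ultimately show ?thesis using IH by linarith
    qed
  qed
  have emp: "U T = {} \<or> Lo T = {}"
    using block[of n] finU[of T] finL[of T] unfolding T_def by auto
  have "Mx (k + T) q - mn (k + T) q \<le> D - eps T"
    using emp
  proof
    assume UT: "U T = {}"
    have "\<forall>i\<in>V - Fa. x (k + T) i $ q \<le> Mx k q - eps T"
      using UT unfolding U_def by auto
    then have "Mx (k + T) q \<le> Mx k q - eps T"
      unfolding Mx_def[of "k + T"] using finB Bne by (simp add: Max_le_iff)
    then show ?thesis using mnkT[of T] unfolding D_def by linarith
  next
    assume LT: "Lo T = {}"
    have "\<forall>i\<in>V - Fa. mn k q + eps T \<le> x (k + T) i $ q"
      using LT unfolding Lo_def by auto
    then have "mn k q + eps T \<le> mn (k + T) q"
      unfolding mn_def[of "k + T"] using finB Bne by (simp add: Min_ge_iff)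
    then show ?thesis using MxkT[of T] unfolding D_def by linarith
  qed
  also have "D - eps T = (1 - 1 / (2 * 3 ^ T)) * D"
    unfolding eps_def by (simp add: field_simps)
  finally show ?thesis unfolding T_def d_def n_def D_def .
qed

lemma final:
  "\<exists>xbar :: real^'d::enum. \<exists>C \<ge> 0. \<exists>\<gamma>::real. 0 \<le> \<gamma> \<and> \<gamma> < 1 \<and>
           (\<forall>k. \<forall>i\<in>V - Fa. norm (x k i - xbar) \<le> C * \<gamma> ^ k)"
proof -
  define T where "T = CARD('d) * card (V - Fa)"
  have Tpos: "0 < T" unfolding T_def using finB Bne by (simp add: card_gt_0_iff)
  define c :: real where "c = 1 - 1 / (2 * 3 ^ T)"
  have c_pos: "0 < c" and c_lt: "c < 1"
  proof -
    have "(1::real) \<le> 3 ^ T" by simp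
    then have "1 / (2 * 3 ^ T) \<le> (1::real) / 2" by (intro divide_left_mono) auto
    then show "0 < c" unfolding c_def by linarith
    show "c < 1" unfolding c_def by simp
  qed
  define R where "R k q = Mx k q - mn k q" for k q
  have R0: "0 \<le> R k q" for k q unfolding R_def using mn_le_Mx[of k q] by simp
  have R_mono: "k \<le> k' \<Longrightarrow> R k' q \<le> R k q" for k k' q
    unfolding R_def using Mx_mono[of k k' q] mn_mono[of k k' q] by linarith
  have R_iter: "R (T * j) q \<le> c ^ j * R 0 q" for j q
  proof (induction j)
    case 0 then show ?case by simp
  next
    case (Suc j)
    have "R (T * Suc j) q = R (T * j + T) q" by (simp add: add.commute)
    also have "\<dots> \<le> c * R (T * j) q"
      using contraction[of "T * j" q] unfolding R_def T_def c_def by simp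
    also have "\<dots> \<le> c * (c ^ j * R 0 q)" using Suc.IH c_pos by (simp add: mult_left_mono)
    finally show ?case by simp
  qed
  have R_bound: "R k q \<le> c ^ (k div T) * R 0 q" for k q
    using R_mono[of "T * (k div T)" k q] R_iter[of "k div T" q]
    by (metis div_times_less_eq_dividend order_trans mult.commute)
  define L where "L q = Inf (range (\<lambda>k. Mx k q))" for q
  have mn_le_Mx2: "mn k q \<le> Mx k' q" for k k' q
  proof (cases "k \<le> k'")
    case True then show ?thesis using mn_mono[OF True, of q] mn_le_Mx[of k' q] by linarith
  next
    case False then have "k' \<le> k" by simp
    then show ?thesis using Mx_mono[of k' k q] mn_le_Mx[of k q] by linarith
  qed
  have bdd: "bdd_below (range (\<lambda>k. Mx k q))" for q
    by (rule bdd_belowI[where m="mn 0 q"]) (use mn_le_Mx2 in auto)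
  have L_lo: "mn k q \<le> L q" for k q
    unfolding L_def by (rule cInf_greatest) (use mn_le_Mx2 in auto)
  have L_hi: "L q \<le> Mx k q" for k q
    unfolding L_def by (rule cInf_lower) (use bdd in auto)
  define xbar :: "real^'d::enum" where "xbar = (\<chi> q. L q)"
  define C where "C = (\<Sum>q\<in>UNIV. R 0 q) / c"
  define \<gamma> where "\<gamma> = root T c"
  have g0: "0 \<le> \<gamma>" unfolding \<gamma>_def using c_pos by (simp add: real_root_ge_zero)
  have g1: "\<gamma> < 1" unfolding \<gamma>_def using c_lt Tpos by simp
  have gT: "\<gamma> ^ T = c" unfolding \<gamma>_def using c_pos Tpos by (simp add: real_root_pow_pos2)
  have C0: "0 \<le> C" unfolding C_def using R0 c_pos by (simp add: sum_nonneg)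
  have pw: "c ^ (k div T) \<le> \<gamma> ^ k / c" for k
  proof -
    have "k \<le> T * (k div T) + T"
      using Tpos by (metis add.commute div_mult_mod_eq mod_less_divisor less_imp_le_nat add_le_mono1 mult.commute)
    then have "\<gamma> ^ (T * (k div T) + T) \<le> \<gamma> ^ k" using g0 g1 by (intro power_decreasing) auto
    moreover have "\<gamma> ^ (T * (k div T) + T) = c ^ (k div T) * c"
      by (simp add: power_add power_mult gT)
    ultimately show ?thesis using c_pos by (simp add: field_simps)
  qed
  have main: "norm (x k i - xbar) \<le> C * \<gamma> ^ k" if i: "i \<in> V - Fa" for k i
  proof -
    have "norm (x k i - xbar) \<le> (\<Sum>q\<in>UNIV. \<bar>(x k i - xbar) $ q\<bar>)" by (rule norm_le_l1_cart)
    also have "\<dots> \<le> (\<Sum>q\<in>UNIV. R k q)"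
    proof (rule sum_mono)
      fix q
      have "mn k q \<le> x k i $ q" "x k i $ q \<le> Mx k q" using mn_le[OF i] Mx_ge[OF i] by auto
      then show "\<bar>(x k i - xbar) $ q\<bar> \<le> R k q"
        unfolding xbar_def R_def using L_lo[where k=k and q=q] L_hi[where k=k and q=q] by simp
    qed
    also have "\<dots> \<le> (\<Sum>q\<in>UNIV. c ^ (k div T) * R 0 q)" by (rule sum_mono) (rule R_bound)
    also have "\<dots> = c ^ (k div T) * (\<Sum>q\<in>UNIV. R 0 q)" by (simp add: sum_distrib_left)
    also have "\<dots> \<le> (\<gamma> ^ k / c) * (\<Sum>q\<in>UNIV. R 0 q)"
      by (rule mult_right_mono[OF pw]) (simp add: R0 sum_nonneg)
    also have "\<dots> = C * \<gamma> ^ k" unfolding C_def by simp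
    finally show ?thesis .
  qed
  show ?thesis using main C0 g0 g1 by blast
qed

end


theorem proposition2:
  fixes V :: "'v set" and E :: "'v \<Rightarrow> 'v \<Rightarrow> bool" and Fa :: "'v set" and f :: nat
    and x :: "nat \<Rightarrow> 'v \<Rightarrow> real^'d::enum" and msg :: "nat \<Rightarrow> 'v \<Rightarrow> 'v \<Rightarrow> real^'d::enum"
  assumes "undirected_graph V E"
    and "\<forall>i\<in>V. card (nbrs V E i) \<ge> (CARD('d::enum) + 1) * f + 1"
    and "Fa \<subseteq> V"
    and "f_local V E Fa f"
    and "r_robust V E ((CARD('d::enum) + 1) * f + 1)"
    and "resilient_run V E Fa f x msg"
  shows "\<exists>xbar :: real^'d::enum. \<exists>C \<ge> 0. \<exists>\<gamma>::real. 0 \<le> \<gamma> \<and> \<gamma> < 1 \<and>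
           (\<forall>k. \<forall>i\<in>V - Fa. norm (x k i - xbar) \<le> C * \<gamma> ^ k)"
proof (cases "V - Fa = {}")
  case True
  then show ?thesis by (intro exI[of _ 0]) auto
next
  case False
  interpret cons_setting V E Fa f x msg
    using assms False by unfold_locales auto
  show ?thesis by (rule final)
qed

end
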